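(* Let $A,B\in\mathcal{H}$ and $f\in\mathscr{C}(A,B)$. Choose a distinguished triangle $S_A[-1]\overset{s_A}{\to}A\overset{w_A}{\to}W_A\to S_A$ with $S_A\in\mathcal{S},W_A\in\mathcal{W}$, then a distinguished triangle $S_A[-1]\overset{f\circ s_A}{\to}B\overset{m_f}{\to}M_f\to S_A$. Further, choose a distinguished triangle $V\to U\overset{a}{\to}M_f\to V[1]$ with $U\in\mathcal{U},V\in\mathcal{V}$, a distinguished triangle $T[-1]\to S[-1]\overset{b}{\to}U\to T$ with $S\in\mathcal{S},T\in\mathcal{T}$, and a distinguished triangle $S[-1]\overset{a\circ b}{\to}M_f\to Z_{M_f}\to S$. Then the following are equivalent: (1) $\underline{f}\in\underline{\mathcal{H}}(A,B)$ is an epimorphism in $\underline{\mathcal{H}}$; (2) $Z_{M_f}\in\mathcal{W}$; (3) $M_f\in\mathcal{U}$.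
   Context: $\mathscr{C}$ is a triangulated category with shift $[1]$; subcategories are full, additive, closed under isomorphisms and direct summands. $\mathrm{Ext}^1(X,Y)=\mathscr{C}(X,Y[1])$. $\mathcal{M}\ast\mathcal{N}$ is the full subcategory of objects $C$ admitting a distinguished triangle $M\to C\to N\to M[1]$ with $M\in\mathcal{M}$, $N\in\mathcal{N}$. A cotorsion pair $(\mathcal{U},\mathcal{V})$: $\mathrm{Ext}^1(\mathcal{U},\mathcal{V})=0$ and $\mathscr{C}=\mathcal{U}\ast\mathcal{V}[1]$. Fix a twin cotorsion pair, i.e. cotorsion pairs $(\mathcal{S},\mathcal{T}),(\mathcal{U},\mathcal{V})$ with $\mathrm{Ext}^1(\mathcal{S},\mathcal{V})=0$. Put $\mathcal{W}=\mathcal{T}\cap\mathcal{U}$, $\mathscr{C}^-=\mathcal{S}[-1]\ast\mathcal{W}$, $\mathscr{C}^+=\mathcal{W}\ast\mathcal{V}[1]$, $\mathcal{H}=\mathscr{C}^+\cap\mathscr{C}^-$. $\underline{\mathcal{H}}$ is the ideal quotient of $\mathcal{H}$ by morphisms factoring through objects of $\mathcal{W}$, and $\underline{f}$ is the image of $f$. *)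

theory Defs
  imports Main
begin

text \<open>A triangle X -f-> Y -g-> Z -h-> X[1] is the sextuple (X,Y,Z,f,g,h).
cmp g f is the composite "g after f".\<close>

record ('o,'m) tricat =
  Ob    :: "'o set"
  Hom   :: "'o \<Rightarrow> 'o \<Rightarrow> 'm set"
  cmp   :: "'m \<Rightarrow> 'm \<Rightarrow> 'm"
  idm   :: "'o \<Rightarrow> 'm"
  addm  :: "'m \<Rightarrow> 'm \<Rightarrow> 'm"
  zerom :: "'o \<Rightarrow> 'o \<Rightarrow> 'm"
  shO   :: "'o \<Rightarrow> 'o"
  shOi  :: "'o \<Rightarrow> 'o"
  shM   :: "'m \<Rightarrow> 'm"
  Tri   :: "('o \<times> 'o \<times> 'o \<times> 'm \<times> 'm \<times> 'm) set"

definition negm :: "('o,'m,'x) tricat_scheme \<Rightarrow> 'o \<Rightarrow> 'o \<Rightarrow> 'm \<Rightarrow> 'm" where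
  "negm C X Y f = (THE g. g \<in> Hom C X Y \<and> addm C f g = zerom C X Y)"

definition iso :: "('o,'m,'x) tricat_scheme \<Rightarrow> 'o \<Rightarrow> 'o \<Rightarrow> 'm \<Rightarrow> bool" where
  "iso C X Y u \<longleftrightarrow> u \<in> Hom C X Y \<and>
     (\<exists>v\<in>Hom C Y X. cmp C v u = idm C X \<and> cmp C u v = idm C Y)"

definition zero_obj :: "('o,'m,'x) tricat_scheme \<Rightarrow> 'o \<Rightarrow> bool" where
  "zero_obj C Z \<longleftrightarrow> Z \<in> Ob C \<and>
     (\<forall>X\<in>Ob C. Hom C X Z = {zerom C X Z} \<and> Hom C Z X = {zerom C Z X})"

definition is_biproduct :: "('o,'m,'x) tricat_scheme \<Rightarrow> 'o \<Rightarrow> 'o \<Rightarrow> 'o \<Rightarrow> 'm \<Rightarrow> 'm \<Rightarrow> 'm \<Rightarrow> 'm \<Rightarrow> bool" where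
  "is_biproduct C X Y P i1 i2 p1 p2 \<longleftrightarrow>
     i1 \<in> Hom C X P \<and> i2 \<in> Hom C Y P \<and> p1 \<in> Hom C P X \<and> p2 \<in> Hom C P Y \<and>
     cmp C p1 i1 = idm C X \<and> cmp C p2 i2 = idm C Y \<and>
     cmp C p2 i1 = zerom C X Y \<and> cmp C p1 i2 = zerom C Y X \<and>
     addm C (cmp C i1 p1) (cmp C i2 p2) = idm C P"

locale triangulated =
  fixes C :: "('o,'m,'x) tricat_scheme"
  assumes hom_ob: "\<And>X Y. X \<notin> Ob C \<or> Y \<notin> Ob C \<Longrightarrow> Hom C X Y = {}"
    and cmp_closed: "\<And>X Y Z f g. f \<in> Hom C X Y \<Longrightarrow> g \<in> Hom C Y Z \<Longrightarrow> cmp C g f \<in> Hom C X Z"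
    and idm_closed: "\<And>X. X \<in> Ob C \<Longrightarrow> idm C X \<in> Hom C X X"
    and idm_left: "\<And>X Y f. f \<in> Hom C X Y \<Longrightarrow> cmp C (idm C Y) f = f"
    and idm_right: "\<And>X Y f. f \<in> Hom C X Y \<Longrightarrow> cmp C f (idm C X) = f"
    and cmp_assoc: "\<And>W X Y Z f g h. f \<in> Hom C W X \<Longrightarrow> g \<in> Hom C X Y \<Longrightarrow> h \<in> Hom C Y Z \<Longrightarrow>
                      cmp C h (cmp C g f) = cmp C (cmp C h g) f"
    and zerom_closed: "\<And>X Y. X \<in> Ob C \<Longrightarrow> Y \<in> Ob C \<Longrightarrow> zerom C X Y \<in> Hom C X Y"
    and add_closed: "\<And>X Y f g. f \<in> Hom C X Y \<Longrightarrow> g \<in> Hom C X Y \<Longrightarrow> addm C f g \<in> Hom C X Y"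
    and add_comm: "\<And>X Y f g. f \<in> Hom C X Y \<Longrightarrow> g \<in> Hom C X Y \<Longrightarrow> addm C f g = addm C g f"
    and add_assoc: "\<And>X Y f g h. f \<in> Hom C X Y \<Longrightarrow> g \<in> Hom C X Y \<Longrightarrow> h \<in> Hom C X Y \<Longrightarrow>
                      addm C (addm C f g) h = addm C f (addm C g h)"
    and add_zero: "\<And>X Y f. f \<in> Hom C X Y \<Longrightarrow> addm C f (zerom C X Y) = f"
    and add_inv: "\<And>X Y f. f \<in> Hom C X Y \<Longrightarrow> \<exists>g\<in>Hom C X Y. addm C f g = zerom C X Y"
    and cmp_add_left: "\<And>X Y Z f g1 g2. f \<in> Hom C X Y \<Longrightarrow> g1 \<in> Hom C Y Z \<Longrightarrow> g2 \<in> Hom C Y Z \<Longrightarrow>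
                      cmp C (addm C g1 g2) f = addm C (cmp C g1 f) (cmp C g2 f)"
    and cmp_add_right: "\<And>X Y Z f1 f2 g. f1 \<in> Hom C X Y \<Longrightarrow> f2 \<in> Hom C X Y \<Longrightarrow> g \<in> Hom C Y Z \<Longrightarrow>
                      cmp C g (addm C f1 f2) = addm C (cmp C g f1) (cmp C g f2)"
    and zero_obj_ex: "\<exists>Z. zero_obj C Z"
    and biproduct_ex: "\<And>X Y. X \<in> Ob C \<Longrightarrow> Y \<in> Ob C \<Longrightarrow>
                      \<exists>P i1 i2 p1 p2. is_biproduct C X Y P i1 i2 p1 p2"
    and shO_closed: "\<And>X. X \<in> Ob C \<Longrightarrow> shO C X \<in> Ob C"
    and shOi_closed: "\<And>X. X \<in> Ob C \<Longrightarrow> shOi C X \<in> Ob C"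
    and shO_shOi: "\<And>X. X \<in> Ob C \<Longrightarrow> shO C (shOi C X) = X"
    and shOi_shO: "\<And>X. X \<in> Ob C \<Longrightarrow> shOi C (shO C X) = X"
    and shM_bij: "\<And>X Y. X \<in> Ob C \<Longrightarrow> Y \<in> Ob C \<Longrightarrow>
                      bij_betw (shM C) (Hom C X Y) (Hom C (shO C X) (shO C Y))"
    and shM_cmp: "\<And>X Y Z f g. f \<in> Hom C X Y \<Longrightarrow> g \<in> Hom C Y Z \<Longrightarrow>
                      shM C (cmp C g f) = cmp C (shM C g) (shM C f)"
    and shM_idm: "\<And>X. X \<in> Ob C \<Longrightarrow> shM C (idm C X) = idm C (shO C X)"
    and shM_add: "\<And>X Y f g. f \<in> Hom C X Y \<Longrightarrow> g \<in> Hom C X Y \<Longrightarrow>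
                      shM C (addm C f g) = addm C (shM C f) (shM C g)"
    and tri_hom: "\<And>X Y Z f g h. (X,Y,Z,f,g,h) \<in> Tri C \<Longrightarrow>
                      f \<in> Hom C X Y \<and> g \<in> Hom C Y Z \<and> h \<in> Hom C Z (shO C X)"
    and TR1_iso: "\<And>X Y Z f g h X' Y' Z' f' g' h' u v w.
                   (X,Y,Z,f,g,h) \<in> Tri C \<Longrightarrow>
                   f' \<in> Hom C X' Y' \<Longrightarrow> g' \<in> Hom C Y' Z' \<Longrightarrow> h' \<in> Hom C Z' (shO C X') \<Longrightarrow>
                   iso C X X' u \<Longrightarrow> iso C Y Y' v \<Longrightarrow> iso C Z Z' w \<Longrightarrow>
                   cmp C f' u = cmp C v f \<Longrightarrow> cmp C g' v = cmp C w g \<Longrightarrow>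
                   cmp C h' w = cmp C (shM C u) h \<Longrightarrow>
                   (X',Y',Z',f',g',h') \<in> Tri C"
    and TR1_id: "\<And>X Z. X \<in> Ob C \<Longrightarrow> zero_obj C Z \<Longrightarrow>
                   (X,X,Z,idm C X, zerom C X Z, zerom C Z (shO C X)) \<in> Tri C"
    and TR1_ex: "\<And>X Y f. f \<in> Hom C X Y \<Longrightarrow> \<exists>Z g h. (X,Y,Z,f,g,h) \<in> Tri C"
    and TR2: "\<And>X Y Z f g h. f \<in> Hom C X Y \<Longrightarrow> g \<in> Hom C Y Z \<Longrightarrow> h \<in> Hom C Z (shO C X) \<Longrightarrow>
                   (X,Y,Z,f,g,h) \<in> Tri C \<longleftrightarrow>
                   (Y,Z,shO C X,g,h,negm C (shO C X) (shO C Y) (shM C f)) \<in> Tri C"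
    and TR3: "\<And>X Y Z f g h X' Y' Z' f' g' h' u v.
                   (X,Y,Z,f,g,h) \<in> Tri C \<Longrightarrow> (X',Y',Z',f',g',h') \<in> Tri C \<Longrightarrow>
                   u \<in> Hom C X X' \<Longrightarrow> v \<in> Hom C Y Y' \<Longrightarrow> cmp C v f = cmp C f' u \<Longrightarrow>
                   \<exists>w\<in>Hom C Z Z'. cmp C w g = cmp C g' v \<and> cmp C h' w = cmp C (shM C u) h"
    and TR4: "\<And>X Y Z Z' X' Y' f g i1 j1 i2 j2 i3 j3.
                   (X,Y,Z',f,i1,j1) \<in> Tri C \<Longrightarrow> (Y,Z,X',g,i2,j2) \<in> Tri C \<Longrightarrow>
                   (X,Z,Y',cmp C g f,i3,j3) \<in> Tri C \<Longrightarrow>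
                   \<exists>u\<in>Hom C Z' Y'. \<exists>v\<in>Hom C Y' X'.
                     (Z',Y',X',u,v,cmp C (shM C i1) j2) \<in> Tri C \<and>
                     cmp C u i1 = cmp C i3 g \<and> cmp C j3 u = j1 \<and>
                     cmp C v i3 = i2 \<and> cmp C j2 v = cmp C (shM C f) j3"

text \<open>Subcategories: full (so just a class of objects), additive, closed under
isomorphisms and direct summands.\<close>
definition subcat :: "('o,'m,'x) tricat_scheme \<Rightarrow> 'o set \<Rightarrow> bool" where
  "subcat C D \<longleftrightarrow> D \<subseteq> Ob C \<and>
     (\<forall>Z. zero_obj C Z \<longrightarrow> Z \<in> D) \<and>
     (\<forall>X Y P i1 i2 p1 p2. X \<in> D \<and> Y \<in> D \<and> is_biproduct C X Y P i1 i2 p1 p2 \<longrightarrow> P \<in> D) \<and>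
     (\<forall>X Y u. X \<in> D \<and> iso C X Y u \<longrightarrow> Y \<in> D) \<and>
     (\<forall>X Y P i1 i2 p1 p2. P \<in> D \<and> is_biproduct C X Y P i1 i2 p1 p2 \<longrightarrow> X \<in> D)"

definition ext1_zero :: "('o,'m,'x) tricat_scheme \<Rightarrow> 'o set \<Rightarrow> 'o set \<Rightarrow> bool" where
  "ext1_zero C X Y \<longleftrightarrow> (\<forall>A\<in>X. \<forall>B\<in>Y. Hom C A (shO C B) = {zerom C A (shO C B)})"

definition star :: "('o,'m,'x) tricat_scheme \<Rightarrow> 'o set \<Rightarrow> 'o set \<Rightarrow> 'o set" where
  "star C M N = {X \<in> Ob C. \<exists>A\<in>M. \<exists>B\<in>N. \<exists>f g h. (A,X,B,f,g,h) \<in> Tri C}"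

definition cotorsion_pair :: "('o,'m,'x) tricat_scheme \<Rightarrow> 'o set \<Rightarrow> 'o set \<Rightarrow> bool" where
  "cotorsion_pair C U V \<longleftrightarrow> subcat C U \<and> subcat C V \<and> ext1_zero C U V \<and>
     Ob C = star C U (shO C ` V)"

definition twin_cotorsion_pair :: "('o,'m,'x) tricat_scheme \<Rightarrow> 'o set \<Rightarrow> 'o set \<Rightarrow> 'o set \<Rightarrow> 'o set \<Rightarrow> bool" where
  "twin_cotorsion_pair C S T U V \<longleftrightarrow> cotorsion_pair C S T \<and> cotorsion_pair C U V \<and> ext1_zero C S V"

definition heartW :: "'o set \<Rightarrow> 'o set \<Rightarrow> 'o set" where
  "heartW T U = T \<inter> U"

definition Cminus :: "('o,'m,'x) tricat_scheme \<Rightarrow> 'o set \<Rightarrow> 'o set \<Rightarrow> 'o set \<Rightarrow> 'o set" where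
  "Cminus C S T U = star C (shOi C ` S) (heartW T U)"

definition Cplus :: "('o,'m,'x) tricat_scheme \<Rightarrow> 'o set \<Rightarrow> 'o set \<Rightarrow> 'o set \<Rightarrow> 'o set" where
  "Cplus C T U V = star C (heartW T U) (shO C ` V)"

definition heart :: "('o,'m,'x) tricat_scheme \<Rightarrow> 'o set \<Rightarrow> 'o set \<Rightarrow> 'o set \<Rightarrow> 'o set \<Rightarrow> 'o set" where
  "heart C S T U V = Cplus C T U V \<inter> Cminus C S T U"

definition factors_through :: "('o,'m,'x) tricat_scheme \<Rightarrow> 'o set \<Rightarrow> 'o \<Rightarrow> 'o \<Rightarrow> 'm \<Rightarrow> bool" where
  "factors_through C W X Y f \<longleftrightarrow> f \<in> Hom C X Y \<and>
     (\<exists>E\<in>W. \<exists>g\<in>Hom C X E. \<exists>h\<in>Hom C E Y. f = cmp C h g)"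

text \<open>Equality of images in the ideal quotient by morphisms factoring through W.\<close>
definition stable_eq :: "('o,'m,'x) tricat_scheme \<Rightarrow> 'o set \<Rightarrow> 'o \<Rightarrow> 'o \<Rightarrow> 'm \<Rightarrow> 'm \<Rightarrow> bool" where
  "stable_eq C W X Y f g \<longleftrightarrow> f \<in> Hom C X Y \<and> g \<in> Hom C X Y \<and>
     (\<exists>e. factors_through C W X Y e \<and> f = addm C g e)"

text \<open>The image of f : A \<rightarrow> B is an epimorphism in the ideal quotient of the
full subcategory on the class H by the ideal of maps factoring through W.\<close>
definition quotient_epi :: "('o,'m,'x) tricat_scheme \<Rightarrow> 'o set \<Rightarrow> 'o set \<Rightarrow> 'o \<Rightarrow> 'o \<Rightarrow> 'm \<Rightarrow> bool" where
  "quotient_epi C H W A B f \<longleftrightarrow>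
     (\<forall>D\<in>H. \<forall>g1\<in>Hom C B D. \<forall>g2\<in>Hom C B D.
        stable_eq C W A D (cmp C g1 f) (cmp C g2 f) \<longrightarrow> stable_eq C W B D g1 g2)"

end

theory Submission
  imports Defs
begin


context triangulated begin

lemma hom_obs: "f \<in> Hom C X Y \<Longrightarrow> X \<in> Ob C \<and> Y \<in> Ob C"
  using hom_ob by blast

lemma add_lzero: assumes f: "f \<in> Hom C X Y" shows "addm C (zerom C X Y) f = f"
proof -
  have "zerom C X Y \<in> Hom C X Y" using hom_obs[OF f] zerom_closed by blast
  thus ?thesis using add_comm[OF f] add_zero[OF f] by simp
qed

lemma add_self_zero:
  assumes a: "a \<in> Hom C X Y" and aa: "addm C a a = a" shows "a = zerom C X Y"
proof -
  obtain n where n: "n \<in> Hom C X Y" "addm C a n = zerom C X Y" using add_inv[OF a] by blast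
  have "addm C (addm C a a) n = zerom C X Y" using aa n by simp
  hence "addm C a (addm C a n) = zerom C X Y" using add_assoc a n by simp
  thus ?thesis using n add_zero a by simp
qed

lemma cmp_zero_left:
  assumes f: "f \<in> Hom C X Y" and Z: "Z \<in> Ob C"
  shows "cmp C (zerom C Y Z) f = zerom C X Z"
proof -
  have Y: "Y \<in> Ob C" using hom_obs f by blast
  have z: "zerom C Y Z \<in> Hom C Y Z" using zerom_closed Y Z by blast
  have "cmp C (addm C (zerom C Y Z) (zerom C Y Z)) f
        = addm C (cmp C (zerom C Y Z) f) (cmp C (zerom C Y Z) f)"
    using cmp_add_left f z by blast
  hence "addm C (cmp C (zerom C Y Z) f) (cmp C (zerom C Y Z) f) = cmp C (zerom C Y Z) f"
    using add_zero z by simp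
  thus ?thesis using add_self_zero cmp_closed f z by blast
qed

lemma cmp_zero_right:
  assumes g: "g \<in> Hom C Y Z" and X: "X \<in> Ob C"
  shows "cmp C g (zerom C X Y) = zerom C X Z"
proof -
  have Y: "Y \<in> Ob C" using hom_obs g by blast
  have z: "zerom C X Y \<in> Hom C X Y" using zerom_closed Y X by blast
  have "cmp C g (addm C (zerom C X Y) (zerom C X Y))
        = addm C (cmp C g (zerom C X Y)) (cmp C g (zerom C X Y))"
    using cmp_add_right g z by blast
  hence "addm C (cmp C g (zerom C X Y)) (cmp C g (zerom C X Y)) = cmp C g (zerom C X Y)"
    using add_zero z by simp
  thus ?thesis using add_self_zero cmp_closed g z by blast
qed

lemma neg_unique:
  assumes a: "a \<in> Hom C X Y" and b: "b \<in> Hom C X Y" and ab: "addm C a b = zerom C X Y"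
  shows "negm C X Y a = b"
  unfolding negm_def
proof (rule the_equality)
  show "b \<in> Hom C X Y \<and> addm C a b = zerom C X Y" using b ab by simp
next
  fix g assume g: "g \<in> Hom C X Y \<and> addm C a g = zerom C X Y"
  have "g = addm C g (addm C a b)" using ab add_zero g by simp
  also have "\<dots> = addm C (addm C g a) b" using add_assoc[of g X Y a b] g a b by simp
  also have "\<dots> = addm C (addm C a g) b" using add_comm[of g X Y a] g a by simp
  also have "\<dots> = b" using g add_lzero b by simp
  finally show "g = b" .
qed

lemma neg_prop:
  assumes a: "a \<in> Hom C X Y"
  shows "negm C X Y a \<in> Hom C X Y \<and> addm C a (negm C X Y a) = zerom C X Y"
proof -
  obtain n where n: "n \<in> Hom C X Y" "addm C a n = zerom C X Y" using add_inv[OF a] by blast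
  thus ?thesis using neg_unique[OF a n(1) n(2)] by simp
qed

lemma neg_closed: "a \<in> Hom C X Y \<Longrightarrow> negm C X Y a \<in> Hom C X Y"
  using neg_prop by blast

lemma neg_neg: assumes a: "a \<in> Hom C X Y" shows "negm C X Y (negm C X Y a) = a"
proof -
  have "addm C (negm C X Y a) a = zerom C X Y" using neg_prop[OF a] add_comm[OF a neg_closed[OF a]] by simp
  thus ?thesis using neg_unique[OF neg_closed[OF a] a] by simp
qed

lemma neg_inj: assumes a: "a \<in> Hom C X Y" and b: "b \<in> Hom C X Y" and e: "negm C X Y a = negm C X Y b" shows "a = b"
proof -
  have "a = negm C X Y (negm C X Y a)" using neg_neg[OF a] by simp
  also have "\<dots> = negm C X Y (negm C X Y b)" using e by simp
  also have "\<dots> = b" using neg_neg[OF b] .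
  finally show ?thesis .
qed

lemma neg_zero: assumes "X \<in> Ob C" "Y \<in> Ob C" shows "negm C X Y (zerom C X Y) = zerom C X Y"
  using neg_unique[OF zerom_closed[OF assms] zerom_closed[OF assms] add_zero[OF zerom_closed[OF assms]]] .

lemma neg_eq_zero: assumes a: "a \<in> Hom C X Y" and n: "negm C X Y a = zerom C X Y" shows "a = zerom C X Y"
proof -
  have "a = negm C X Y (negm C X Y a)" using neg_neg[OF a] by simp
  also have "\<dots> = zerom C X Y" using n neg_zero hom_obs[OF a] by simp
  finally show ?thesis .
qed

lemma cmp_neg_left:
  assumes f: "f \<in> Hom C X A" and g: "g \<in> Hom C A B"
  shows "cmp C (negm C A B g) f = negm C X B (cmp C g f)"
proof -
  have B: "B \<in> Ob C" using hom_obs g by blast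
  have "addm C (cmp C g f) (cmp C (negm C A B g) f) = cmp C (addm C g (negm C A B g)) f"
    by (rule cmp_add_left[OF f g neg_closed[OF g], symmetric])
  also have "\<dots> = zerom C X B" using neg_prop g cmp_zero_left f B by simp
  finally show ?thesis using neg_unique[OF cmp_closed[OF f g] cmp_closed[OF f neg_closed[OF g]]] by simp
qed

lemma cmp_neg_right:
  assumes f: "f \<in> Hom C X A" and g: "g \<in> Hom C A B"
  shows "cmp C g (negm C X A f) = negm C X B (cmp C g f)"
proof -
  have X: "X \<in> Ob C" using hom_obs f by blast
  have "addm C (cmp C g f) (cmp C g (negm C X A f)) = cmp C g (addm C f (negm C X A f))"
    by (rule cmp_add_right[OF f neg_closed[OF f] g, symmetric])
  also have "\<dots> = zerom C X B" using neg_prop f cmp_zero_right g X by simp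
  finally show ?thesis using neg_unique[OF cmp_closed[OF f g] cmp_closed[OF neg_closed[OF f] g]] by simp
qed

lemma diff_eq:
  assumes a: "a \<in> Hom C X Y" and b: "b \<in> Hom C X Y" and d: "addm C a (negm C X Y b) = zerom C X Y"
  shows "a = b"
  using neg_inj[OF a b] neg_unique[OF a neg_closed[OF b] d] by simp

lemma shM_closed: assumes f: "f \<in> Hom C X Y" shows "shM C f \<in> Hom C (shO C X) (shO C Y)"
proof -
  have o: "X \<in> Ob C" "Y \<in> Ob C" using hom_obs[OF f] by auto
  have "\<forall>a\<in>Hom C X Y. shM C a \<in> Hom C (shO C X) (shO C Y)" by (rule bij_betwE[OF shM_bij[OF o]])
  thus ?thesis using f by simp
qed

lemma shM_inj: assumes f: "f \<in> Hom C X Y" and g: "g \<in> Hom C X Y" and e: "shM C f = shM C g" shows "f = g"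
proof -
  have o: "X \<in> Ob C" "Y \<in> Ob C" using hom_obs[OF f] by auto
  show ?thesis by (rule inj_onD[OF bij_betw_imp_inj_on[OF shM_bij[OF o]] e f g])
qed

lemma shM_surj: assumes a: "X \<in> Ob C" "Y \<in> Ob C" "k \<in> Hom C (shO C X) (shO C Y)"
  shows "\<exists>f\<in>Hom C X Y. shM C f = k"
proof -
  have "shM C ` Hom C X Y = Hom C (shO C X) (shO C Y)" by (rule bij_betw_imp_surj_on[OF shM_bij[OF a(1,2)]])
  hence "k \<in> shM C ` Hom C X Y" using a(3) by simp
  thus ?thesis by blast
qed

end


context triangulated begin

lemma tri_homs: assumes t: "(X,Y,Z,f,g,h) \<in> Tri C"
  shows "f \<in> Hom C X Y" "g \<in> Hom C Y Z" "h \<in> Hom C Z (shO C X)"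
  using tri_hom[OF t] by auto

lemma tri_obs: assumes t: "(X,Y,Z,f,g,h) \<in> Tri C"
  shows "X \<in> Ob C" "Y \<in> Ob C" "Z \<in> Ob C"
  using hom_obs[OF tri_homs(1)[OF t]] hom_obs[OF tri_homs(2)[OF t]] by auto

lemma rot: assumes t: "(X,Y,Z,f,g,h) \<in> Tri C"
  shows "(Y,Z,shO C X,g,h,negm C (shO C X) (shO C Y) (shM C f)) \<in> Tri C"
  using TR2[OF tri_homs[OF t]] t by simp

lemma rot_back: assumes t: "(Y,Z,shO C X,g,h,k) \<in> Tri C" and X: "X \<in> Ob C"
  shows "\<exists>f\<in>Hom C X Y. (X,Y,Z,f,g,h) \<in> Tri C"
proof -
  note hs = tri_homs[OF t]
  have Y: "Y \<in> Ob C" using tri_obs[OF t] by simp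
  have nk: "negm C (shO C X) (shO C Y) k \<in> Hom C (shO C X) (shO C Y)" by (rule neg_closed[OF hs(3)])
  obtain f where f: "f \<in> Hom C X Y" "shM C f = negm C (shO C X) (shO C Y) k"
    using shM_surj[OF X Y nk] by blast
  have "negm C (shO C X) (shO C Y) (shM C f) = k" using f(2) neg_neg[OF hs(3)] by simp
  hence "(Y,Z,shO C X,g,h,negm C (shO C X) (shO C Y) (shM C f)) \<in> Tri C" using t by simp
  hence "(X,Y,Z,f,g,h) \<in> Tri C" using TR2[OF f(1) hs(1) hs(2)] by simp
  thus ?thesis using f(1) by blast
qed

lemma zero_obj_ob: "zero_obj C Z \<Longrightarrow> Z \<in> Ob C"
  unfolding zero_obj_def by simp

lemma tri_cz: assumes t: "(X,Y,Z,f,g,h) \<in> Tri C"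
  shows "cmp C g f = zerom C X Z"
proof -
  obtain Z0 where z: "zero_obj C Z0" using zero_obj_ex by blast
  have X: "X \<in> Ob C" using tri_obs[OF t] by simp
  note hs = tri_homs[OF t]
  have t0: "(X,X,Z0,idm C X, zerom C X Z0, zerom C Z0 (shO C X)) \<in> Tri C" by (rule TR1_id[OF X z])
  obtain w where w: "w \<in> Hom C Z0 Z" "cmp C w (zerom C X Z0) = cmp C g f"
    using TR3[OF t0 t idm_closed[OF X] hs(1) refl] by blast
  show ?thesis using w cmp_zero_right[OF w(1) X] by simp
qed

lemma tri_cz2: assumes t: "(X,Y,Z,f,g,h) \<in> Tri C"
  shows "cmp C h g = zerom C Y (shO C X)"
  by (rule tri_cz[OF rot[OF t]])

lemma tri_cz3: assumes t: "(X,Y,Z,f,g,h) \<in> Tri C"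
  shows "cmp C (shM C f) h = zerom C Z (shO C Y)"
proof -
  note hs = tri_homs[OF t]
  have "cmp C (negm C (shO C X) (shO C Y) (shM C f)) h = zerom C Z (shO C Y)"
    by (rule tri_cz[OF rot[OF rot[OF t]]])
  hence "negm C Z (shO C Y) (cmp C (shM C f) h) = zerom C Z (shO C Y)"
    using cmp_neg_left[OF hs(3) shM_closed[OF hs(1)]] by simp
  thus ?thesis using neg_eq_zero[OF cmp_closed[OF hs(3) shM_closed[OF hs(1)]]] by simp
qed

lemma exact_contra:
  assumes t: "(X,Y,Z,f,g,h) \<in> Tri C" and u: "u \<in> Hom C Y D" and uf: "cmp C u f = zerom C X D"
  shows "\<exists>w\<in>Hom C Z D. cmp C w g = u"
proof -
  obtain Z0 where z: "zero_obj C Z0" using zero_obj_ex by blast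
  have Z0: "Z0 \<in> Ob C" using zero_obj_ob[OF z] .
  have D: "D \<in> Ob C" using hom_obs[OF u] by simp
  have X: "X \<in> Ob C" using tri_obs[OF t] by simp
  have t0: "(D,D,Z0,idm C D, zerom C D Z0, zerom C Z0 (shO C D)) \<in> Tri C" by (rule TR1_id[OF D z])
  hence "(D,D,shO C (shOi C Z0),idm C D, zerom C D Z0, zerom C Z0 (shO C D)) \<in> Tri C"
    using shO_shOi[OF Z0] by simp
  then obtain f' where f': "f' \<in> Hom C (shOi C Z0) D" "(shOi C Z0, D, D, f', idm C D, zerom C D Z0) \<in> Tri C"
    using rot_back shOi_closed[OF Z0] by blast
  have u0: "zerom C X (shOi C Z0) \<in> Hom C X (shOi C Z0)" using zerom_closed[OF X shOi_closed[OF Z0]] .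
  have cond: "cmp C u f = cmp C f' (zerom C X (shOi C Z0))" using uf cmp_zero_right[OF f'(1) X] by simp
  obtain w where w: "w \<in> Hom C Z D" "cmp C w g = cmp C (idm C D) u"
    using TR3[OF t f'(2) u0 u cond] by blast
  thus ?thesis using idm_left[OF u] by auto
qed

lemma exact_cov:
  assumes t: "(X,Y,Z,f,g,h) \<in> Tri C" and u: "u \<in> Hom C W Y" and gu: "cmp C g u = zerom C W Z"
  shows "\<exists>u'\<in>Hom C W X. u = cmp C f u'"
proof -
  obtain Z0 where z: "zero_obj C Z0" using zero_obj_ex by blast
  have Z0: "Z0 \<in> Ob C" using zero_obj_ob[OF z] .
  have W: "W \<in> Ob C" using hom_obs[OF u] by simp
  note hs = tri_homs[OF t]
  have Zo: "Z \<in> Ob C" "X \<in> Ob C" using tri_obs[OF t] by auto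
  have t0: "(W,W,Z0,idm C W, zerom C W Z0, zerom C Z0 (shO C W)) \<in> Tri C" by (rule TR1_id[OF W z])
  note r0 = rot[OF t0] and r = rot[OF t]
  have v: "zerom C Z0 Z \<in> Hom C Z0 Z" using zerom_closed[OF Z0 Zo(1)] .
  have cond: "cmp C (zerom C Z0 Z) (zerom C W Z0) = cmp C g u"
    using cmp_zero_left[OF zerom_closed[OF W Z0] Zo(1)] gu by simp
  obtain w where w: "w \<in> Hom C (shO C W) (shO C X)"
    "cmp C (negm C (shO C X) (shO C Y) (shM C f)) w
       = cmp C (shM C u) (negm C (shO C W) (shO C W) (shM C (idm C W)))"
    using TR3[OF r0 r u v cond] by blast
  have su: "shM C u \<in> Hom C (shO C W) (shO C Y)" using shM_closed[OF u] .
  have sf: "shM C f \<in> Hom C (shO C X) (shO C Y)" using shM_closed[OF hs(1)] .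
  have ids: "idm C (shO C W) \<in> Hom C (shO C W) (shO C W)" using idm_closed shO_closed[OF W] by blast
  have "cmp C (shM C u) (negm C (shO C W) (shO C W) (shM C (idm C W)))
      = negm C (shO C W) (shO C Y) (shM C u)"
    using shM_idm[OF W] cmp_neg_right[OF ids su] idm_right[OF su] by simp
  moreover have "cmp C (negm C (shO C X) (shO C Y) (shM C f)) w
      = negm C (shO C W) (shO C Y) (cmp C (shM C f) w)"
    using cmp_neg_left[OF w(1) sf] .
  ultimately have "negm C (shO C W) (shO C Y) (cmp C (shM C f) w) = negm C (shO C W) (shO C Y) (shM C u)"
    using w(2) by simp
  hence e: "cmp C (shM C f) w = shM C u" using neg_inj[OF cmp_closed[OF w(1) sf] su] by simp
  obtain u' where u': "u' \<in> Hom C W X" "shM C u' = w" using shM_surj[OF W Zo(2) w(1)] by blast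
  have "shM C (cmp C f u') = shM C u" using shM_cmp[OF u'(1) hs(1)] u'(2) e by simp
  hence "cmp C f u' = u" using shM_inj[OF cmp_closed[OF u'(1) hs(1)] u] by simp
  thus ?thesis using u'(1) by auto
qed

end


context triangulated begin

lemma retract:
  assumes D: "subcat C D" and Y: "Y \<in> D" and r: "r \<in> Hom C X Y" and p: "p \<in> Hom C Y X"
    and pr: "cmp C p r = idm C X"
  shows "X \<in> D"
proof -
  obtain K q h where t: "(X,Y,K,r,q,h) \<in> Tri C" using TR1_ex[OF r] by blast
  note hs = tri_homs[OF t]
  have X: "X \<in> Ob C" and Yo: "Y \<in> Ob C" and Ko: "K \<in> Ob C" using tri_obs[OF t] by auto
  have sp: "shM C p \<in> Hom C (shO C Y) (shO C X)" using shM_closed[OF p] .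
  have sr: "shM C r \<in> Hom C (shO C X) (shO C Y)" using shM_closed[OF r] .
  have c3: "cmp C (shM C r) h = zerom C K (shO C Y)" by (rule tri_cz3[OF t])
  have "cmp C (shM C p) (shM C r) = idm C (shO C X)"
    using shM_cmp[OF r p] pr shM_idm[OF X] by simp
  hence "h = cmp C (cmp C (shM C p) (shM C r)) h" using idm_left[OF hs(3)] by simp
  also have "\<dots> = cmp C (shM C p) (cmp C (shM C r) h)" using cmp_assoc[OF hs(3) sr sp] by simp
  also have "\<dots> = zerom C K (shO C X)" using c3 cmp_zero_right[OF sp Ko] by simp
  finally have h0: "h = zerom C K (shO C X)" .
  have idK: "idm C K \<in> Hom C K K" using idm_closed[OF Ko] .
  have "cmp C h (idm C K) = zerom C K (shO C X)" using idm_right[OF hs(3)] h0 by simp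
  then obtain s where s: "s \<in> Hom C K Y" "idm C K = cmp C q s"
    using exact_cov[OF rot[OF t] idK] by blast
  have ps: "cmp C p s \<in> Hom C K X" using cmp_closed[OF s(1) p] .
  have rps: "cmp C r (cmp C p s) \<in> Hom C K Y" using cmp_closed[OF ps r] .
  define s' where "s' = addm C s (negm C K Y (cmp C r (cmp C p s)))"
  have nrps: "negm C K Y (cmp C r (cmp C p s)) \<in> Hom C K Y" using neg_closed[OF rps] .
  have s': "s' \<in> Hom C K Y" unfolding s'_def using add_closed[OF s(1) nrps] .
  have qr: "cmp C q r = zerom C X K" by (rule tri_cz[OF t])
  have "cmp C q (cmp C r (cmp C p s)) = cmp C (cmp C q r) (cmp C p s)"
    using cmp_assoc[OF ps r hs(2)] .
  also have "\<dots> = zerom C K K" using qr cmp_zero_left[OF ps Ko] by simp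
  finally have qrps: "cmp C q (cmp C r (cmp C p s)) = zerom C K K" .
  have qs': "cmp C q s' = idm C K"
  proof -
    have "cmp C q s' = addm C (cmp C q s) (cmp C q (negm C K Y (cmp C r (cmp C p s))))"
      unfolding s'_def using cmp_add_right[OF s(1) nrps hs(2)] .
    also have "\<dots> = addm C (idm C K) (negm C K K (cmp C q (cmp C r (cmp C p s))))"
      using s(2) cmp_neg_right[OF rps hs(2)] by simp
    also have "\<dots> = idm C K" using qrps neg_zero[OF Ko Ko] add_zero[OF idK] by simp
    finally show ?thesis .
  qed
  have "cmp C p (cmp C r (cmp C p s)) = cmp C (cmp C p r) (cmp C p s)"
    using cmp_assoc[OF ps r p] .
  also have "\<dots> = cmp C p s" using pr idm_left[OF ps] by simp
  finally have prps: "cmp C p (cmp C r (cmp C p s)) = cmp C p s" .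
  have ps': "cmp C p s' = zerom C K X"
  proof -
    have "cmp C p s' = addm C (cmp C p s) (cmp C p (negm C K Y (cmp C r (cmp C p s))))"
      unfolding s'_def using cmp_add_right[OF s(1) nrps p] .
    also have "\<dots> = addm C (cmp C p s) (negm C K X (cmp C p s))"
      using cmp_neg_right[OF rps p] prps by simp
    also have "\<dots> = zerom C K X" using neg_prop[OF ps] by simp
    finally show ?thesis .
  qed
  have rp: "cmp C r p \<in> Hom C Y Y" using cmp_closed[OF p r] .
  have sq: "cmp C s' q \<in> Hom C Y Y" using cmp_closed[OF hs(2) s'] .
  define m where "m = addm C (cmp C r p) (cmp C s' q)"
  have m: "m \<in> Hom C Y Y" unfolding m_def using add_closed[OF rp sq] .
  have idY: "idm C Y \<in> Hom C Y Y" using idm_closed[OF Yo] .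
  define d where "d = addm C (idm C Y) (negm C Y Y m)"
  have nm: "negm C Y Y m \<in> Hom C Y Y" using neg_closed[OF m] .
  have d: "d \<in> Hom C Y Y" unfolding d_def using add_closed[OF idY nm] .
  have mr: "cmp C m r = r"
  proof -
    have "cmp C m r = addm C (cmp C (cmp C r p) r) (cmp C (cmp C s' q) r)"
      unfolding m_def using cmp_add_left[OF r rp sq] .
    also have "cmp C (cmp C r p) r = r" using cmp_assoc[OF r p r, symmetric] pr idm_right[OF r] by simp
    also have "cmp C (cmp C s' q) r = zerom C X Y"
      using cmp_assoc[OF r hs(2) s', symmetric] qr cmp_zero_right[OF s' X] by simp
    finally show ?thesis using add_zero[OF r] by simp
  qed
  have dr: "cmp C d r = zerom C X Y"
  proof -
    have "cmp C d r = addm C (cmp C (idm C Y) r) (cmp C (negm C Y Y m) r)"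
      unfolding d_def using cmp_add_left[OF r idY nm] .
    also have "\<dots> = addm C r (negm C X Y r)" using idm_left[OF r] cmp_neg_left[OF r m] mr by simp
    finally show ?thesis using neg_prop[OF r] by simp
  qed
  have ms': "cmp C m s' = s'"
  proof -
    have "cmp C m s' = addm C (cmp C (cmp C r p) s') (cmp C (cmp C s' q) s')"
      unfolding m_def using cmp_add_left[OF s' rp sq] .
    also have "cmp C (cmp C r p) s' = zerom C K Y"
      using cmp_assoc[OF s' p r, symmetric] ps' cmp_zero_right[OF r Ko] by simp
    also have "cmp C (cmp C s' q) s' = s'"
      using cmp_assoc[OF s' hs(2) s', symmetric] qs' idm_right[OF s'] by simp
    finally show ?thesis using add_lzero[OF s'] by simp
  qed
  have ds': "cmp C d s' = zerom C K Y"
  proof -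
    have "cmp C d s' = addm C (cmp C (idm C Y) s') (cmp C (negm C Y Y m) s')"
      unfolding d_def using cmp_add_left[OF s' idY nm] .
    also have "\<dots> = addm C s' (negm C K Y s')" using idm_left[OF s'] cmp_neg_left[OF s' m] ms' by simp
    finally show ?thesis using neg_prop[OF s'] by simp
  qed
  obtain d' where d': "d' \<in> Hom C K Y" "cmp C d' q = d" using exact_contra[OF t d dr] by blast
  have "d' = cmp C d' (cmp C q s')" using qs' idm_right[OF d'(1)] by simp
  also have "\<dots> = cmp C d s'" using cmp_assoc[OF s' hs(2) d'(1)] d'(2) by simp
  finally have d'0: "d' = zerom C K Y" using ds' by simp
  have "d = zerom C Y Y" using d'(2) d'0 cmp_zero_left[OF hs(2) Yo] by simp
  hence "idm C Y = m" using diff_eq[OF idY m] unfolding d_def by simp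
  hence bp: "is_biproduct C X K Y r s' p q"
    unfolding is_biproduct_def using r s' p hs(2) pr qs' qr ps' m_def by simp
  thus ?thesis using D Y unfolding subcat_def by blast
qed

lemma ext0: "ext1_zero C D E \<Longrightarrow> A \<in> D \<Longrightarrow> B \<in> E \<Longrightarrow> e \<in> Hom C A (shO C B) \<Longrightarrow> e = zerom C A (shO C B)"
  unfolding ext1_zero_def by blast

lemma cot_char:
  assumes cp: "cotorsion_pair C D E" and Y: "Y \<in> Ob C"
    and z: "\<And>E' e. E' \<in> E \<Longrightarrow> e \<in> Hom C Y (shO C E') \<Longrightarrow> e = zerom C Y (shO C E')"
  shows "Y \<in> D"
proof -
  have "Y \<in> star C D (shO C ` E)" using cp Y unfolding cotorsion_pair_def by blast
  then obtain A E' f g h where A: "A \<in> D" and E': "E' \<in> E" and t: "(A,Y,shO C E',f,g,h) \<in> Tri C"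
    unfolding star_def by blast
  note hs = tri_homs[OF t]
  have g0: "g = zerom C Y (shO C E')" using z[OF E' hs(2)] .
  have "cmp C g (idm C Y) = zerom C Y (shO C E')" using idm_right[OF hs(2)] g0 by simp
  then obtain r where r: "r \<in> Hom C Y A" "idm C Y = cmp C f r" using exact_cov[OF t idm_closed[OF Y]] by blast
  have "subcat C D" using cp unfolding cotorsion_pair_def by blast
  thus ?thesis using retract[OF _ A r(1) hs(1)] r(2) by simp
qed

lemma cot_ext:
  assumes cp: "cotorsion_pair C D E" and t: "(X,Y,Z,f,g,h) \<in> Tri C" and X: "X \<in> D" and Z: "Z \<in> D"
  shows "Y \<in> D"
proof (rule cot_char[OF cp])
  show "Y \<in> Ob C" using tri_obs[OF t] by simp
next
  fix E' e assume E': "E' \<in> E" and e: "e \<in> Hom C Y (shO C E')"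
  note hs = tri_homs[OF t]
  have ez: "ext1_zero C D E" using cp unfolding cotorsion_pair_def by blast
  have "cmp C e f = zerom C X (shO C E')" using ext0[OF ez X E' cmp_closed[OF hs(1) e]] .
  then obtain e' where e': "e' \<in> Hom C Z (shO C E')" "cmp C e' g = e" using exact_contra[OF t e] by blast
  have "e' = zerom C Z (shO C E')" using ext0[OF ez Z E' e'(1)] .
  thus "e = zerom C Y (shO C E')" using e'(2) cmp_zero_left[OF hs(2)] hom_obs[OF e] by auto
qed

end


context triangulated begin

lemma subcat_ob: "subcat C D \<Longrightarrow> X \<in> D \<Longrightarrow> X \<in> Ob C"
  unfolding subcat_def by blast

lemma S_sub_U:
  assumes tw: "twin_cotorsion_pair C Sc Tc Uc Vc" and X: "X \<in> Sc"
  shows "X \<in> Uc"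
proof -
  have cpST: "cotorsion_pair C Sc Tc" and cpUV: "cotorsion_pair C Uc Vc" and ezSV: "ext1_zero C Sc Vc"
    using tw unfolding twin_cotorsion_pair_def by auto
  have Xo: "X \<in> Ob C" using subcat_ob X cpST unfolding cotorsion_pair_def by blast
  show ?thesis by (rule cot_char[OF cpUV Xo ext0[OF ezSV X]])
qed

lemma hom_SiT:
  assumes tw: "twin_cotorsion_pair C Sc Tc Uc Vc" and S: "S \<in> Sc" and E: "E \<in> Tc"
    and e: "e \<in> Hom C (shOi C S) E"
  shows "e = zerom C (shOi C S) E"
proof -
  have cpST: "cotorsion_pair C Sc Tc" using tw unfolding twin_cotorsion_pair_def by auto
  have ez: "ext1_zero C Sc Tc" using cpST unfolding cotorsion_pair_def by auto
  have So: "S \<in> Ob C" using subcat_ob S cpST unfolding cotorsion_pair_def by blast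
  have Eo: "E \<in> Ob C" using subcat_ob E cpST unfolding cotorsion_pair_def by blast
  have Si: "shOi C S \<in> Ob C" using shOi_closed[OF So] .
  have z: "zerom C (shOi C S) E \<in> Hom C (shOi C S) E" using zerom_closed[OF Si Eo] .
  have "shM C e \<in> Hom C S (shO C E)" using shM_closed[OF e] shO_shOi[OF So] by simp
  hence 1: "shM C e = zerom C S (shO C E)" using ext0[OF ez S E] by simp
  have "shM C (zerom C (shOi C S) E) \<in> Hom C S (shO C E)" using shM_closed[OF z] shO_shOi[OF So] by simp
  hence 2: "shM C (zerom C (shOi C S) E) = zerom C S (shO C E)" using ext0[OF ez S E] by simp
  show ?thesis using shM_inj[OF e z] 1 2 by simp
qed

lemma U_sub_Cminus:
  assumes tw: "twin_cotorsion_pair C Sc Tc Uc Vc" and Q: "Q \<in> Uc"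
  shows "Q \<in> Cminus C Sc Tc Uc"
proof -
  have cpST: "cotorsion_pair C Sc Tc" and cpUV: "cotorsion_pair C Uc Vc"
    using tw unfolding twin_cotorsion_pair_def by auto
  have Qo: "Q \<in> Ob C" using subcat_ob Q cpUV unfolding cotorsion_pair_def by blast
  have "shO C Q \<in> star C Sc (shO C ` Tc)" using cpST shO_closed[OF Qo] unfolding cotorsion_pair_def by blast
  then obtain S2 T2 al be ga where S2: "S2 \<in> Sc" and T2: "T2 \<in> Tc"
    and t: "(S2, shO C Q, shO C T2, al, be, ga) \<in> Tri C"
    unfolding star_def by blast
  have T2o: "T2 \<in> Ob C" using subcat_ob T2 cpST unfolding cotorsion_pair_def by blast
  have S2o: "S2 \<in> Ob C" using subcat_ob S2 cpST unfolding cotorsion_pair_def by blast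
  obtain f1 where t1: "(T2, S2, shO C Q, f1, al, be) \<in> Tri C" using rot_back[OF t T2o] by blast
  obtain f2 where t2: "(Q, T2, S2, f2, f1, al) \<in> Tri C" using rot_back[OF t1 Qo] by blast
  have t2': "(Q, T2, shO C (shOi C S2), f2, f1, al) \<in> Tri C" using t2 shO_shOi[OF S2o] by simp
  obtain f3 where t3: "(shOi C S2, Q, T2, f3, f2, f1) \<in> Tri C" using rot_back[OF t2' shOi_closed[OF S2o]] by blast
  have "T2 \<in> Uc" using cot_ext[OF cpUV t2 Q S_sub_U[OF tw S2]] .
  thus ?thesis unfolding Cminus_def star_def heartW_def using Qo t3 S2 T2 by blast
qed

lemma Cminus_ext:
  assumes tw: "twin_cotorsion_pair C Sc Tc Uc Vc" and X: "X \<in> Cminus C Sc Tc Uc"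
    and t: "(X,Y,S',al,be,ga) \<in> Tri C" and S': "S' \<in> Sc"
  shows "Y \<in> Cminus C Sc Tc Uc"
proof -
  have cpST: "cotorsion_pair C Sc Tc" and cpUV: "cotorsion_pair C Uc Vc"
    using tw unfolding twin_cotorsion_pair_def by auto
  obtain S1 W1 s1 w1 t1 where S1: "S1 \<in> Sc" and W1: "W1 \<in> Tc" "W1 \<in> Uc"
    and tX: "(shOi C S1, X, W1, s1, w1, t1) \<in> Tri C"
    using X unfolding Cminus_def star_def heartW_def by blast
  have S1o: "S1 \<in> Ob C" using subcat_ob S1 cpST unfolding cotorsion_pair_def by blast
  have s1: "s1 \<in> Hom C (shOi C S1) X" using tri_homs(1)[OF tX] .
  have al: "al \<in> Hom C X Y" using tri_homs(1)[OF t] .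
  obtain Q q r where tQ: "(shOi C S1, Y, Q, cmp C al s1, q, r) \<in> Tri C"
    using TR1_ex[OF cmp_closed[OF s1 al]] by blast
  obtain u v where "(W1, Q, S', u, v, cmp C (shM C w1) ga) \<in> Tri C"
    using TR4[OF tX t tQ] by blast
  hence QU: "Q \<in> Uc" using cot_ext[OF cpUV _ W1(2) S_sub_U[OF tw S']] by blast
  obtain S2 W2 s2 w2 t2 where S2: "S2 \<in> Sc" and W2: "W2 \<in> Tc" "W2 \<in> Uc"
    and tQ2: "(shOi C S2, Q, W2, s2, w2, t2) \<in> Tri C"
    using U_sub_Cminus[OF tw QU] unfolding Cminus_def star_def heartW_def by blast
  have S2o: "S2 \<in> Ob C" using subcat_ob S2 cpST unfolding cotorsion_pair_def by blast
  have rQ: "(Y, Q, S1, q, r, negm C (shO C (shOi C S1)) (shO C Y) (shM C (cmp C al s1))) \<in> Tri C"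
    using rot[OF tQ] shO_shOi[OF S1o] by simp
  have rQ2: "(Q, W2, S2, w2, t2, negm C (shO C (shOi C S2)) (shO C Q) (shM C s2)) \<in> Tri C"
    using rot[OF tQ2] shO_shOi[OF S2o] by simp
  have q: "q \<in> Hom C Y Q" using tri_homs(2)[OF tQ] .
  have w2: "w2 \<in> Hom C Q W2" using tri_homs(2)[OF tQ2] .
  obtain E e1 e2 where tE: "(Y, W2, E, cmp C w2 q, e1, e2) \<in> Tri C"
    using TR1_ex[OF cmp_closed[OF q w2]] by blast
  obtain u' v' where "(S1, E, S2, u', v', cmp C (shM C r) (negm C (shO C (shOi C S2)) (shO C Q) (shM C s2))) \<in> Tri C"
    using TR4[OF rQ rQ2 tE] by blast
  hence ES: "E \<in> Sc" using cot_ext[OF cpST _ S1 S2] by blast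
  have Eo: "E \<in> Ob C" using subcat_ob ES cpST unfolding cotorsion_pair_def by blast
  have "(Y, W2, shO C (shOi C E), cmp C w2 q, e1, e2) \<in> Tri C" using tE shO_shOi[OF Eo] by simp
  then obtain f where tY: "(shOi C E, Y, W2, f, cmp C w2 q, e1) \<in> Tri C"
    using rot_back shOi_closed[OF Eo] by blast
  have Yo: "Y \<in> Ob C" using tri_obs[OF t] by simp
  show ?thesis unfolding Cminus_def star_def heartW_def using Yo tY ES W2 by blast
qed

end


theorem corollary4p5:
  fixes C :: "('o,'m,'x) tricat_scheme"
    and Sc Tc Uc Vc :: "'o set"
  assumes "triangulated C"
    and "twin_cotorsion_pair C Sc Tc Uc Vc"
    and "A \<in> heart C Sc Tc Uc Vc" and "B \<in> heart C Sc Tc Uc Vc"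
    and "f \<in> Hom C A B"
    and "S\<^sub>A \<in> Sc" and "W\<^sub>A \<in> heartW Tc Uc"
    and "(shOi C S\<^sub>A, A, W\<^sub>A, s\<^sub>A, w\<^sub>A, t\<^sub>A) \<in> Tri C"
    and "(shOi C S\<^sub>A, B, M\<^sub>f, cmp C f s\<^sub>A, m\<^sub>f, t\<^sub>f) \<in> Tri C"
    and "U \<in> Uc" and "V \<in> Vc"
    and "(V, U, M\<^sub>f, v, a, t\<^sub>V) \<in> Tri C"
    and "S \<in> Sc" and "T \<in> Tc"
    and "(shOi C T, shOi C S, U, x, b, t\<^sub>T) \<in> Tri C"
    and "(shOi C S, M\<^sub>f, Z, cmp C a b, z, t\<^sub>Z) \<in> Tri C"
  shows "(quotient_epi C (heart C Sc Tc Uc Vc) (heartW Tc Uc) A B f \<longleftrightarrow> Z \<in> heartW Tc Uc)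
       \<and> (Z \<in> heartW Tc Uc \<longleftrightarrow> M\<^sub>f \<in> Uc)"
proof -
  interpret triangulated C by (rule assms(1))
  note tw = assms(2)
  have cpST: "cotorsion_pair C Sc Tc" and cpUV: "cotorsion_pair C Uc Vc" and ezSV: "ext1_zero C Sc Vc"
    using tw unfolding twin_cotorsion_pair_def by auto
  have subS: "subcat C Sc" and subT: "subcat C Tc" and ezST: "ext1_zero C Sc Tc"
    using cpST unfolding cotorsion_pair_def by auto
  have subU: "subcat C Uc" and subV: "subcat C Vc" and ezUV: "ext1_zero C Uc Vc"
    using cpUV unfolding cotorsion_pair_def by auto
  have To: "T \<in> Ob C" using subcat_ob[OF subT assms(14)] .
  have So: "S \<in> Ob C" using subcat_ob[OF subS assms(13)] .
  have SAo: "S\<^sub>A \<in> Ob C" using subcat_ob[OF subS assms(6)] .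
  note tA = assms(8) and tf = assms(9) and tV = assms(12) and tT = assms(15) and tZ = assms(16)
  have tT': "(shOi C S, U, T, b, t\<^sub>T, negm C (shO C (shOi C T)) (shO C (shOi C S)) (shM C x)) \<in> Tri C"
    using rot[OF tT] shO_shOi[OF To] by simp
  note tV' = rot[OF tV]
  obtain u vv where uv: "u \<in> Hom C T Z" "vv \<in> Hom C Z (shO C V)"
    and tTZ: "(T, Z, shO C V, u, vv, cmp C (shM C t\<^sub>T) (negm C (shO C V) (shO C U) (shM C v))) \<in> Tri C"
    and vz: "cmp C vv z = t\<^sub>V"
    using TR4[OF tT' tV' tZ] by blast
  have rZ: "(M\<^sub>f, Z, S, z, t\<^sub>Z, negm C (shO C (shOi C S)) (shO C M\<^sub>f) (shM C (cmp C a b))) \<in> Tri C"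
    using rot[OF tZ] shO_shOi[OF So] by simp
  have rf: "(B, M\<^sub>f, S\<^sub>A, m\<^sub>f, t\<^sub>f, negm C (shO C (shOi C S\<^sub>A)) (shO C B) (shM C (cmp C f s\<^sub>A))) \<in> Tri C"
    using rot[OF tf] shO_shOi[OF SAo] by simp
  have tVh: "t\<^sub>V \<in> Hom C M\<^sub>f (shO C V)" using tri_homs(3)[OF tV] .
  have zh: "z \<in> Hom C M\<^sub>f Z" using tri_homs(2)[OF tZ] .
  have tZh: "t\<^sub>Z \<in> Hom C Z S" using tri_homs(3)[OF tZ] shO_shOi[OF So] by simp
  have Vo: "V \<in> Ob C" using subcat_ob[OF subV assms(11)] .
  have Mo: "M\<^sub>f \<in> Ob C" and Zo: "Z \<in> Ob C" using tri_obs[OF tZ] by auto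
  have ah: "a \<in> Hom C U M\<^sub>f" using tri_homs(2)[OF tV] .
  have mfh: "m\<^sub>f \<in> Hom C B M\<^sub>f" using tri_homs(2)[OF tf] .

  have K1: "M\<^sub>f \<in> Uc" if h: "t\<^sub>V = zerom C M\<^sub>f (shO C V)"
  proof -
    have "cmp C t\<^sub>V (idm C M\<^sub>f) = zerom C M\<^sub>f (shO C V)" using idm_right[OF tVh] h by simp
    then obtain r where r: "r \<in> Hom C M\<^sub>f U" "idm C M\<^sub>f = cmp C a r"
      using exact_cov[OF tV' idm_closed[OF Mo]] by blast
    show ?thesis using retract[OF subU assms(10) r(1) ah] r(2) by simp
  qed
  have K2: "t\<^sub>V = zerom C M\<^sub>f (shO C V)" if h: "M\<^sub>f \<in> Uc"
    using ext0[OF ezUV h assms(11) tVh] .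
  have K3: "t\<^sub>V = zerom C M\<^sub>f (shO C V)" if h: "Z \<in> heartW Tc Uc"
  proof -
    have "vv = zerom C Z (shO C V)" using ext0[OF ezUV _ assms(11) uv(2)] h unfolding heartW_def by blast
    thus ?thesis using vz cmp_zero_left[OF zh shO_closed[OF Vo]] by simp
  qed
  have K4: "Z \<in> heartW Tc Uc" if h: "M\<^sub>f \<in> Uc"
  proof -
    have "cmp C vv z = zerom C M\<^sub>f (shO C V)" using vz K2[OF h] by simp
    then obtain k where k: "k \<in> Hom C S (shO C V)" "cmp C k t\<^sub>Z = vv"
      using exact_contra[OF rZ uv(2)] by blast
    have "k = zerom C S (shO C V)" using ext0[OF ezSV assms(13) assms(11) k(1)] .
    hence vv0: "vv = zerom C Z (shO C V)" using k(2) cmp_zero_left[OF tZh shO_closed[OF Vo]] by simp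
    have "cmp C vv (idm C Z) = zerom C Z (shO C V)" using idm_right[OF uv(2)] vv0 by simp
    then obtain r where r: "r \<in> Hom C Z T" "idm C Z = cmp C u r"
      using exact_cov[OF tTZ idm_closed[OF Zo]] by blast
    have ZT: "Z \<in> Tc" using retract[OF subT assms(14) r(1) uv(1)] r(2) by simp
    have ZU: "Z \<in> Uc"
    proof (rule cot_char[OF cpUV Zo])
      fix E' e assume E': "E' \<in> Vc" and e: "e \<in> Hom C Z (shO C E')"
      have "cmp C e z = zerom C M\<^sub>f (shO C E')" using ext0[OF ezUV h E' cmp_closed[OF zh e]] .
      then obtain k where k: "k \<in> Hom C S (shO C E')" "cmp C k t\<^sub>Z = e"
        using exact_contra[OF rZ e] by blast
      have "k = zerom C S (shO C E')" using ext0[OF ezSV assms(13) E' k(1)] .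
      thus "e = zerom C Z (shO C E')" using k(2) cmp_zero_left[OF tZh] hom_obs[OF e] by auto
    qed
    show ?thesis using ZT ZU unfolding heartW_def by simp
  qed
  have sAh: "s\<^sub>A \<in> Hom C (shOi C S\<^sub>A) A" using tri_homs(1)[OF tA] .
  have fsh: "cmp C f s\<^sub>A \<in> Hom C (shOi C S\<^sub>A) B" using cmp_closed[OF sAh assms(5)] .
  have SAi: "shOi C S\<^sub>A \<in> Ob C" using shOi_closed[OF SAo] .
  have K5: "quotient_epi C (heart C Sc Tc Uc Vc) (heartW Tc Uc) A B f" if h: "M\<^sub>f \<in> Uc"
    unfolding quotient_epi_def
  proof (intro ballI impI)
    fix D g1 g2 assume D: "D \<in> heart C Sc Tc Uc Vc" and g1: "g1 \<in> Hom C B D" and g2: "g2 \<in> Hom C B D"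
      and st: "stable_eq C (heartW Tc Uc) A D (cmp C g1 f) (cmp C g2 f)"
    obtain e where e: "factors_through C (heartW Tc Uc) A D e" and e1: "cmp C g1 f = addm C (cmp C g2 f) e"
      using st unfolding stable_eq_def by blast
    obtain E k hh where E: "E \<in> heartW Tc Uc" and k: "k \<in> Hom C A E" and hh: "hh \<in> Hom C E D"
      and eh: "e = cmp C hh k" and eH: "e \<in> Hom C A D"
      using e unfolding factors_through_def by blast
    have ng2: "negm C B D g2 \<in> Hom C B D" using neg_closed[OF g2] .
    define g where "g = addm C g1 (negm C B D g2)"
    have g: "g \<in> Hom C B D" unfolding g_def using add_closed[OF g1 ng2] .
    have g1f: "cmp C g1 f \<in> Hom C A D" using cmp_closed[OF assms(5) g1] .
    have g2f: "cmp C g2 f \<in> Hom C A D" using cmp_closed[OF assms(5) g2] .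
    have ng2f: "negm C A D (cmp C g2 f) \<in> Hom C A D" using neg_closed[OF g2f] .
    have "cmp C g f = addm C (cmp C g1 f) (cmp C (negm C B D g2) f)"
      unfolding g_def using cmp_add_left[OF assms(5) g1 ng2] .
    also have "\<dots> = addm C (addm C (cmp C g2 f) e) (negm C A D (cmp C g2 f))"
      using e1 cmp_neg_left[OF assms(5) g2] by simp
    also have "\<dots> = addm C (addm C e (cmp C g2 f)) (negm C A D (cmp C g2 f))"
      using add_comm[OF g2f eH] by simp
    also have "\<dots> = addm C e (addm C (cmp C g2 f) (negm C A D (cmp C g2 f)))"
      using add_assoc[OF eH g2f ng2f] .
    also have "\<dots> = e" using neg_prop[OF g2f] add_zero[OF eH] by simp
    finally have gf: "cmp C g f = e" .
    have ksA: "cmp C k s\<^sub>A \<in> Hom C (shOi C S\<^sub>A) E" using cmp_closed[OF sAh k] .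
    have "cmp C k s\<^sub>A = zerom C (shOi C S\<^sub>A) E"
      using hom_SiT[OF tw assms(6) _ ksA] E unfolding heartW_def by blast
    hence "cmp C g (cmp C f s\<^sub>A) = zerom C (shOi C S\<^sub>A) D"
      using cmp_assoc[OF sAh assms(5) g] gf eh cmp_assoc[OF sAh k hh] cmp_zero_right[OF hh SAi] by simp
    then obtain g' where g': "g' \<in> Hom C M\<^sub>f D" "cmp C g' m\<^sub>f = g" using exact_contra[OF tf g] by blast
    obtain WD VD i p hD where WD: "WD \<in> heartW Tc Uc" and VD: "VD \<in> Vc"
      and tD: "(WD, D, shO C VD, i, p, hD) \<in> Tri C"
      using D unfolding heart_def Cplus_def star_def by blast
    have ph: "p \<in> Hom C D (shO C VD)" using tri_homs(2)[OF tD] .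
    have ih: "i \<in> Hom C WD D" using tri_homs(1)[OF tD] .
    have "cmp C p g' = zerom C M\<^sub>f (shO C VD)" using ext0[OF ezUV h VD cmp_closed[OF g'(1) ph]] .
    then obtain h' where h': "h' \<in> Hom C M\<^sub>f WD" "g' = cmp C i h'" using exact_cov[OF tD g'(1)] by blast
    have gi: "g = cmp C i (cmp C h' m\<^sub>f)" using g'(2) h' cmp_assoc[OF mfh h'(1) ih] by simp
    have ft: "factors_through C (heartW Tc Uc) B D g"
      unfolding factors_through_def using g WD cmp_closed[OF mfh h'(1)] ih gi by blast
    have "addm C g2 g = addm C (addm C g2 g1) (negm C B D g2)"
      unfolding g_def using add_assoc[OF g2 g1 ng2] by simp
    also have "\<dots> = addm C (addm C g1 g2) (negm C B D g2)" using add_comm[OF g2 g1] by simp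
    also have "\<dots> = addm C g1 (addm C g2 (negm C B D g2))" using add_assoc[OF g1 g2 ng2] .
    also have "\<dots> = g1" using neg_prop[OF g2] add_zero[OF g1] by simp
    finally have "g1 = addm C g2 g" by simp
    thus "stable_eq C (heartW Tc Uc) B D g1 g2" unfolding stable_eq_def using g1 g2 ft by blast
  qed
  have K6: "t\<^sub>V = zerom C M\<^sub>f (shO C V)" if h: "quotient_epi C (heart C Sc Tc Uc Vc) (heartW Tc Uc) A B f"
  proof -
    have rT: "(U, T, S, t\<^sub>T, negm C (shO C (shOi C T)) (shO C (shOi C S)) (shM C x),
               negm C (shO C (shOi C S)) (shO C U) (shM C b)) \<in> Tri C"
      using rot[OF tT'] shO_shOi[OF So] by simp
    have TU: "T \<in> Uc" using cot_ext[OF cpUV rT assms(10) S_sub_U[OF tw assms(13)]] .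
    have ZP: "Z \<in> Cplus C Tc Uc Vc"
      unfolding Cplus_def star_def heartW_def using Zo tTZ assms(14) TU assms(11) by blast
    have BM: "B \<in> Cminus C Sc Tc Uc" using assms(4) unfolding heart_def by blast
    have MM: "M\<^sub>f \<in> Cminus C Sc Tc Uc" using Cminus_ext[OF tw BM rf assms(6)] .
    have ZM: "Z \<in> Cminus C Sc Tc Uc" using Cminus_ext[OF tw MM rZ assms(13)] .
    have ZH: "Z \<in> heart C Sc Tc Uc Vc" unfolding heart_def using ZP ZM by blast
    have Bo: "B \<in> Ob C" using hom_obs[OF assms(5)] by simp
    have Ao: "A \<in> Ob C" using hom_obs[OF assms(5)] by simp
    have g1: "cmp C z m\<^sub>f \<in> Hom C B Z" using cmp_closed[OF mfh zh] .
    have g2: "zerom C B Z \<in> Hom C B Z" using zerom_closed[OF Bo Zo] .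
    have mff: "cmp C m\<^sub>f f \<in> Hom C A M\<^sub>f" using cmp_closed[OF assms(5) mfh] .
    have "cmp C (cmp C m\<^sub>f f) s\<^sub>A = zerom C (shOi C S\<^sub>A) M\<^sub>f"
      using tri_cz[OF tf] cmp_assoc[OF sAh assms(5) mfh] by simp
    then obtain y where y: "y \<in> Hom C W\<^sub>A M\<^sub>f" "cmp C y w\<^sub>A = cmp C m\<^sub>f f"
      using exact_contra[OF tA mff] by blast
    have wA: "w\<^sub>A \<in> Hom C A W\<^sub>A" using tri_homs(2)[OF tA] .
    have zy: "cmp C z y \<in> Hom C W\<^sub>A Z" using cmp_closed[OF y(1) zh] .
    have g1f: "cmp C (cmp C z m\<^sub>f) f = cmp C (cmp C z y) w\<^sub>A"
      using cmp_assoc[OF assms(5) mfh zh, symmetric] y(2) cmp_assoc[OF wA y(1) zh] by simp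
    have g1fh: "cmp C (cmp C z m\<^sub>f) f \<in> Hom C A Z" using cmp_closed[OF assms(5) g1] .
    have g2f: "cmp C (zerom C B Z) f = zerom C A Z" using cmp_zero_left[OF assms(5) Zo] .
    have ft: "factors_through C (heartW Tc Uc) A Z (cmp C (cmp C z m\<^sub>f) f)"
      unfolding factors_through_def using g1fh assms(7) wA zy g1f by blast
    have eq: "cmp C (cmp C z m\<^sub>f) f = addm C (cmp C (zerom C B Z) f) (cmp C (cmp C z m\<^sub>f) f)"
      using g2f add_lzero[OF g1fh] by simp
    have "stable_eq C (heartW Tc Uc) A Z (cmp C (cmp C z m\<^sub>f) f) (cmp C (zerom C B Z) f)"
      unfolding stable_eq_def using g1fh g2f zerom_closed[OF Ao Zo] ft eq by auto
    hence "stable_eq C (heartW Tc Uc) B Z (cmp C z m\<^sub>f) (zerom C B Z)"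
      using h ZH g1 g2 unfolding quotient_epi_def by blast
    then obtain e where e: "factors_through C (heartW Tc Uc) B Z e" and e1: "cmp C z m\<^sub>f = addm C (zerom C B Z) e"
      unfolding stable_eq_def by blast
    obtain E k hh where E: "E \<in> heartW Tc Uc" and k: "k \<in> Hom C B E" and hh: "hh \<in> Hom C E Z"
      and eh: "e = cmp C hh k" and eH: "e \<in> Hom C B Z"
      using e unfolding factors_through_def by blast
    have zm: "cmp C z m\<^sub>f = cmp C hh k" using e1 add_lzero[OF eH] eh by simp
    have vh: "cmp C vv hh \<in> Hom C E (shO C V)" using cmp_closed[OF hh uv(2)] .
    have vh0: "cmp C vv hh = zerom C E (shO C V)"
      using ext0[OF ezUV _ assms(11) vh] E unfolding heartW_def by blast
    have "cmp C t\<^sub>V m\<^sub>f = cmp C vv (cmp C z m\<^sub>f)" using vz cmp_assoc[OF mfh zh uv(2)] by simp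
    also have "\<dots> = cmp C (cmp C vv hh) k" using zm cmp_assoc[OF k hh uv(2)] by simp
    also have "\<dots> = zerom C B (shO C V)" using vh0 cmp_zero_left[OF k shO_closed[OF Vo]] by simp
    finally have "cmp C t\<^sub>V m\<^sub>f = zerom C B (shO C V)" .
    then obtain k' where k': "k' \<in> Hom C S\<^sub>A (shO C V)" "cmp C k' t\<^sub>f = t\<^sub>V"
      using exact_contra[OF rf tVh] by blast
    have "k' = zerom C S\<^sub>A (shO C V)" using ext0[OF ezSV assms(6) assms(11) k'(1)] .
    moreover have tfh: "t\<^sub>f \<in> Hom C M\<^sub>f S\<^sub>A" using tri_homs(3)[OF tf] shO_shOi[OF SAo] by simp
    ultimately show ?thesis using k'(2) cmp_zero_left[OF tfh shO_closed[OF Vo]] by simp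
  qed
  show ?thesis using K1 K3 K4 K5 K6 by blast
qed

end
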